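(* Let $k\ge 2$ and $\ell_1\ge \ell_2\ge\cdots\ge \ell_k\ge 0$ be integers, let $B=B(\ell_1,\dots,\ell_k)$ and $n=2k+\sum_{i=1}^k\ell_i$. Then for every integer $t\ge 1$, \[(t-1)(k+\ell_1)+n+k(k-2)\le \hat r(tK_2,B)\le n+(t-1)\ell_1+(k+t-1)^2-2k.\]
   Context: All graphs are finite and simple. For integers $k\ge 2$ and $\ell_1\ge\cdots\ge\ell_k\ge0$, $B(\ell_1,\dots,\ell_k)$ is the graph obtained from the complete bipartite graph $K_{k,k}$ by attaching $\ell_i$ pendant edges (each to a new leaf vertex) to the $i$-th vertex of one fixed part of the bipartition, for $i=1,\dots,k$. $tK_2$ is a matching with $t$ edges. For graphs $F,G,H$, $F\to(G,H)$ means every red--blue coloring of $E(F)$ contains a red copy of $G$ or a blue copy of $H$, and $\hat r(G,H)=\min\{|E(F)|:F\to(G,H)\}$. *)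

theory Defs
  imports Main
begin

text \<open>Vertices of a pattern graph are those covered by its edges
(the pattern graphs used here have no isolated vertices).\<close>

definition is_graph :: "'a set set \<Rightarrow> bool" where
  "is_graph E \<longleftrightarrow> finite E \<and> (\<forall>e\<in>E. card e = 2)"

definition contains_copy :: "'b set set \<Rightarrow> 'a set set \<Rightarrow> bool" where
  "contains_copy H G \<longleftrightarrow> (\<exists>f. inj_on f (\<Union>G) \<and> (\<forall>e\<in>G. f ` e \<in> H))"

text \<open>F \<rightarrow> (G,H): every red/blue colouring (c e = True means red) of the edges of F has
a red copy of G or a blue copy of H.\<close>
definition arrows :: "'c set set \<Rightarrow> 'a set set \<Rightarrow> 'b set set \<Rightarrow> bool" where
  "arrows F G H \<longleftrightarrow>
     (\<forall>c :: 'c set \<Rightarrow> bool. contains_copy {e\<in>F. c e} G \<or> contains_copy {e\<in>F. \<not> c e} H)"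

text \<open>Size Ramsey number; host graphs are taken on vertex set nat (every finite graph is
isomorphic to one on nat).\<close>
definition size_ramsey :: "'a set set \<Rightarrow> 'b set set \<Rightarrow> nat" where
  "size_ramsey G H = (LEAST m. \<exists>F :: nat set set. is_graph F \<and> card F = m \<and> arrows F G H)"

definition matching :: "nat \<Rightarrow> (nat \<times> bool) set set" where
  "matching t = {{(i, False), (i, True)} | i. i < t}"

datatype bvert = PA nat | PB nat | Leaf nat nat

text \<open>B(l_1,...,l_k): K_{k,k} with parts PA 1..PA k and PB 1..PB k, plus l i pendant edges
at PA i (leaves Leaf i 1, ..., Leaf i (l i)).\<close>
definition Bgraph :: "nat \<Rightarrow> (nat \<Rightarrow> nat) \<Rightarrow> bvert set set" where
  "Bgraph k l = {{PA i, PB j} | i j. i \<in> {1..k} \<and> j \<in> {1..k}}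
              \<union> {{PA i, Leaf i j} | i j. i \<in> {1..k} \<and> j \<in> {1..l i}}"

end

theory Submission
  imports Defs "HOL-Library.Nat_Bijection"
begin

lemma Union_matching: "\<Union>(matching t) = {..<t} \<times> UNIV"
  unfolding matching_def by (auto; case_tac b; auto)

lemma mem_matching: "e \<in> matching t \<longleftrightarrow> (\<exists>i<t. e = {(i, False), (i, True)})"
  unfolding matching_def by auto

lemma contains_copy_mono: "contains_copy H G \<Longrightarrow> H \<subseteq> H' \<Longrightarrow> contains_copy H' G"
  unfolding contains_copy_def by blast

lemma copy_card:
  assumes "contains_copy F G" "finite F"
  shows "card G \<le> card F"
proof -
  obtain f where inj: "inj_on f (\<Union>G)" and im: "\<forall>e\<in>G. f ` e \<in> F"
    using assms(1) unfolding contains_copy_def by blast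
  have "inj_on ((`) f) G"
    by (rule inj_onI) (meson Sup_upper inj inj_on_image_eq_iff)
  hence "card G = card ((`) f ` G)" by (simp add: card_image)
  also have "\<dots> \<le> card F" using im assms(2) by (intro card_mono) auto
  finally show ?thesis .
qed

lemma all_blue:
  assumes "t \<ge> 1" "arrows F (matching t) B"
  shows "contains_copy F B"
proof -
  have "contains_copy {e\<in>F. False} (matching t) \<or> contains_copy {e\<in>F. \<not> False} B"
    using assms(2) unfolding arrows_def by (erule_tac x="\<lambda>_. False" in allE) simp
  moreover have "\<not> contains_copy {e\<in>F. False} (matching t)"
  proof
    assume "contains_copy {e\<in>F. False} (matching t)"
    then obtain f where "\<forall>e\<in>matching t. f ` e \<in> {}" unfolding contains_copy_def by auto
    moreover have "{(0, False), (0, True)} \<in> matching t" using assms(1) unfolding mem_matching by (intro exI[of _ 0]) auto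
    ultimately show False by blast
  qed
  ultimately show ?thesis by simp
qed

lemma drop_vertex:
  assumes "contains_copy R (matching (Suc t))"
  shows "contains_copy {e\<in>R. v \<notin> e} (matching t)"
proof -
  obtain f where inj: "inj_on f ({..<Suc t} \<times> UNIV)" and im: "\<forall>e\<in>matching (Suc t). f ` e \<in> R"
    using assms unfolding contains_copy_def Union_matching by blast
  define P where "P i \<longleftrightarrow> i < Suc t \<and> v \<in> f ` {(i,False),(i,True)}" for i
  define i0 where "i0 = (if \<exists>i. P i then (SOME i. P i) else t)"
  have i0: "i0 < Suc t"
    unfolding i0_def by (auto intro: someI2 simp: P_def)
  have key: "i = i0" if "P i" for i
  proof -
    have Pi0: "P i0" unfolding i0_def using that by (auto intro: someI)
    from that obtain b where b: "v = f (i, b)" "i < Suc t" unfolding P_def by auto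
    from Pi0 obtain b' where b': "v = f (i0, b')" unfolding P_def by auto
    have "(i, b) = (i0, b')" using inj b b' i0 by (auto simp: inj_on_def)
    thus ?thesis by simp
  qed
  define h where "h i = (if i < i0 then i else Suc i)" for i
  define g where "g p = f (h (fst p), snd p)" for p
  have hlt: "h i < Suc t" if "i < t" for i using that i0 by (simp add: h_def)
  have hinj: "h i = h j \<Longrightarrow> i = j" for i j by (auto simp: h_def split: if_splits)
  have hne: "h i \<noteq> i0" for i by (simp add: h_def)
  show ?thesis unfolding contains_copy_def Union_matching
  proof (intro exI conjI ballI)
    show "inj_on g ({..<t} \<times> UNIV)"
    proof (rule inj_onI)
      fix p q assume "p \<in> {..<t} \<times> (UNIV::bool set)" "q \<in> {..<t} \<times> (UNIV::bool set)" "g p = g q"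
      then have "(h (fst p), snd p) = (h (fst q), snd q)"
        using inj hlt unfolding g_def inj_on_def by (metis SigmaE SigmaI UNIV_I fst_conv lessThan_iff)
      thus "p = q" using hinj by (simp add: prod_eq_iff)
    qed
  next
    fix e assume "e \<in> matching t"
    then obtain i where i: "i < t" "e = {(i, False), (i, True)}" unfolding mem_matching by auto
    have ge: "g ` e = f ` {(h i, False), (h i, True)}" using i by (simp add: g_def)
    have "{(h i, False), (h i, True)} \<in> matching (Suc t)" using hlt[OF i(1)] unfolding mem_matching by auto
    hence "f ` {(h i, False), (h i, True)} \<in> R" using im by blast
    hence "g ` e \<in> R" using ge by simp
    moreover have "v \<notin> g ` e" using key[of "h i"] hne hlt[OF i(1)] ge unfolding P_def by auto
    ultimately show "g ` e \<in> {e \<in> R. v \<notin> e}" by simp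
  qed
qed

lemma extend_matching:
  assumes inj: "inj_on g (\<Union>(matching s))" and im: "\<forall>e\<in>matching s. g ` e \<in> R"
    and uv: "u \<noteq> v" "u \<notin> g ` \<Union>(matching s)" "v \<notin> g ` \<Union>(matching s)" "{u, v} \<in> R"
  shows "contains_copy R (matching (Suc s))"
proof -
  define g' where "g' p = (if fst p = s then (if snd p then v else u) else g p)" for p
  show ?thesis unfolding contains_copy_def
  proof (intro exI conjI ballI)
    show "inj_on g' (\<Union>(matching (Suc s)))"
      unfolding Union_matching
    proof (rule inj_onI)
      fix p q assume p: "p \<in> {..<Suc s} \<times> (UNIV::bool set)" and q: "q \<in> {..<Suc s} \<times> (UNIV::bool set)"
        and e: "g' p = g' q"
      obtain a b where ab: "p = (a, b)" by fastforce
      obtain c d where cd: "q = (c, d)" by fastforce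
      have gi: "g (a, b) = g (c, d) \<Longrightarrow> a < s \<Longrightarrow> c < s \<Longrightarrow> (a, b) = (c, d)"
        using inj unfolding Union_matching inj_on_def by blast
      have gu: "x < s \<Longrightarrow> g (x, y) \<noteq> u" "x < s \<Longrightarrow> g (x, y) \<noteq> v" for x y
        using uv unfolding Union_matching by force+
      show "p = q" using p q e gi gu uv(1) unfolding ab cd g'_def
        by (auto simp: less_Suc_eq split: if_splits)
    qed
  next
    fix e assume "e \<in> matching (Suc s)"
    then obtain i where i: "i < Suc s" "e = {(i, False), (i, True)}" unfolding mem_matching by auto
    show "g' ` e \<in> R"
    proof (cases "i = s")
      case True
      then show ?thesis using i uv by (simp add: g'_def insert_commute)
    next
      case False
      hence "i < s" using i by simp
      hence "g' ` e = g ` e" "e \<in> matching s" using i by (auto simp: g'_def mem_matching)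
      then show ?thesis using im by simp
    qed
  qed
qed

definition sub :: "nat set \<Rightarrow> nat set \<Rightarrow> (nat \<Rightarrow> nat) \<Rightarrow> bvert set set" where
  "sub I J L = {{PA i, PB j} | i j. i \<in> I \<and> j \<in> J}
              \<union> {{PA i, Leaf i j} | i j. i \<in> I \<and> j \<in> {1..L i}}"

lemma Bgraph_sub: "Bgraph k l = sub {1..k} {1..k} l"
  unfolding Bgraph_def sub_def by simp

lemma sub_eq: "sub I J L = (\<lambda>(i,j). {PA i, PB j}) ` (I \<times> J)
    \<union> (\<lambda>(i,j). {PA i, Leaf i j}) ` (SIGMA i:I. {1..L i})"
  unfolding sub_def by auto

lemma Union_sub: "\<Union>(sub I J L) \<subseteq> PA ` I \<union> PB ` J \<union> {Leaf i j | i j. i \<in> I}"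
  unfolding sub_def by auto

lemma sub_mono: "I' \<subseteq> I \<Longrightarrow> J' \<subseteq> J \<Longrightarrow> sub I' J' L \<subseteq> sub I J L"
  unfolding sub_def by blast

lemma card_sub:
  assumes "finite I" "finite J"
  shows "card (sub I J L) = card I * card J + (\<Sum>i\<in>I. L i)"
proof -
  have d: "(\<lambda>(i,j). {PA i, PB j}) ` (I \<times> J) \<inter> (\<lambda>(i,j). {PA i, Leaf i j}) ` (SIGMA i:I. {1..L i}) = {}"
    by (auto simp: doubleton_eq_iff)
  have i1: "inj_on (\<lambda>(i,j). {PA i, PB j}) (I \<times> J)"
    by (auto simp: inj_on_def doubleton_eq_iff)
  have i2: "inj_on (\<lambda>(i,j). {PA i, Leaf i j}) (SIGMA i:I. {1..L i})"
    by (auto simp: inj_on_def doubleton_eq_iff)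
  have "card (sub I J L) = card (I \<times> J) + card (SIGMA i:I. {1..L i})"
    unfolding sub_eq using assms d card_image[OF i1] card_image[OF i2]
    by (subst card_Un_disjoint) (simp_all del: Sigma_cong)
  also have "\<dots> = card I * card J + (\<Sum>i\<in>I. L i)"
    using assms by (simp add: card_cartesian_product card_SigmaI)
  finally show ?thesis .
qed

lemma card_Bgraph: "card (Bgraph k l) = k * k + (\<Sum>i=1..k. l i)"
  unfolding Bgraph_sub by (simp add: card_sub)

lemma is_graph_sub: "finite I \<Longrightarrow> finite J \<Longrightarrow> is_graph (sub I J L)"
  unfolding is_graph_def sub_eq by auto

lemma copyB:
  assumes "\<sigma> ` {1..k} \<subseteq> I" "inj_on \<sigma> {1..k}" "\<tau> ` {1..k} \<subseteq> J" "inj_on \<tau> {1..k}"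
    "\<forall>i\<in>{1..k}. l i \<le> L (\<sigma> i)"
  shows "contains_copy (sub I J L) (Bgraph k l)"
proof -
  define f where "f v = (case v of PA i \<Rightarrow> PA (\<sigma> i) | PB j \<Rightarrow> PB (\<tau> j) | Leaf i j \<Rightarrow> Leaf (\<sigma> i) j)" for v
  have U: "\<Union>(Bgraph k l) \<subseteq> PA ` {1..k} \<union> PB ` {1..k} \<union> {Leaf i j | i j. i \<in> {1..k}}"
    using Union_sub[of "{1..k}" "{1..k}" l] unfolding Bgraph_sub .
  have "inj_on f (PA ` {1..k} \<union> PB ` {1..k} \<union> {Leaf i j | i j. i \<in> {1..k}})"
  proof (rule inj_onI)
    fix x y assume x: "x \<in> PA ` {1..k} \<union> PB ` {1..k} \<union> {Leaf i j | i j. i \<in> {1..k}}"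
      and y: "y \<in> PA ` {1..k} \<union> PB ` {1..k} \<union> {Leaf i j | i j. i \<in> {1..k}}"
      and e: "f x = f y"
    have i1: "\<sigma> a = \<sigma> b \<Longrightarrow> a \<in> {1..k} \<Longrightarrow> b \<in> {1..k} \<Longrightarrow> a = b" for a b
      using assms(2) unfolding inj_on_def by blast
    have i2: "\<tau> a = \<tau> b \<Longrightarrow> a \<in> {1..k} \<Longrightarrow> b \<in> {1..k} \<Longrightarrow> a = b" for a b
      using assms(4) unfolding inj_on_def by blast
    show "x = y"
    proof (cases x)
      case (PA a)
      then have a: "a \<in> {1..k}" using x by auto
      show ?thesis
      proof (cases y)
        case (PA b) then have "b \<in> {1..k}" using y by auto
        then show ?thesis using e i1[of a b] a \<open>x = PA a\<close> PA by (simp add: f_def)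
      qed (use e \<open>x = PA a\<close> in \<open>simp_all add: f_def\<close>)
    next
      case (PB a)
      then have a: "a \<in> {1..k}" using x by auto
      show ?thesis
      proof (cases y)
        case (PB b) then have "b \<in> {1..k}" using y by auto
        then show ?thesis using e i2[of a b] a \<open>x = PB a\<close> PB by (simp add: f_def)
      qed (use e \<open>x = PB a\<close> in \<open>simp_all add: f_def\<close>)
    next
      case (Leaf a c)
      then have a: "a \<in> {1..k}" using x by auto
      show ?thesis
      proof (cases y)
        case (Leaf b d) then have "b \<in> {1..k}" using y by auto
        then show ?thesis using e i1[of a b] a \<open>x = Leaf a c\<close> Leaf by (simp add: f_def)
      qed (use e \<open>x = Leaf a c\<close> in \<open>simp_all add: f_def\<close>)
    qed
  qed
  hence inj: "inj_on f (\<Union>(Bgraph k l))" using U inj_on_subset by blast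
  show ?thesis unfolding contains_copy_def
  proof (intro exI conjI ballI)
    show "inj_on f (\<Union>(Bgraph k l))" by (rule inj)
  next
    fix e assume "e \<in> Bgraph k l"
    then consider (a) i j where "i \<in> {1..k}" "j \<in> {1..k}" "e = {PA i, PB j}"
      | (b) i j where "i \<in> {1..k}" "j \<in> {1..l i}" "e = {PA i, Leaf i j}"
      unfolding Bgraph_def by blast
    then show "f ` e \<in> sub I J L"
    proof cases
      case a
      then have "f ` e = {PA (\<sigma> i), PB (\<tau> j)}" by (simp add: f_def)
      moreover have "\<sigma> i \<in> I" "\<tau> j \<in> J" using a assms(1,3) by auto
      ultimately show ?thesis unfolding sub_def by blast
    next
      case b
      then have "f ` e = {PA (\<sigma> i), Leaf (\<sigma> i) j}" by (simp add: f_def)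
      moreover have "\<sigma> i \<in> I" "j \<in> {1..L (\<sigma> i)}" using b assms(1,5) by force+
      ultimately show ?thesis unfolding sub_def by blast
    qed
  qed
qed

fun enc :: "bvert \<Rightarrow> nat" where
  "enc (PA i) = 3 * i"
| "enc (PB j) = 3 * j + 1"
| "enc (Leaf i j) = 3 * prod_encode (i, j) + 2"

lemma inj_enc: "inj enc"
proof (rule injI)
  fix x y assume "enc x = enc y"
  then show "x = y"
    by (cases x; cases y; simp; presburger?) (metis prod_encode_eq Pair_inject)?
qed

lemma arrows_inj:
  assumes "inj h" "arrows F G H"
  shows "arrows ((`) h ` F) G H"
  unfolding arrows_def
proof
  fix c :: "'b set \<Rightarrow> bool"
  have "contains_copy {e\<in>F. c (h ` e)} G \<or> contains_copy {e\<in>F. \<not> c (h ` e)} H"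
    using spec[OF assms(2)[unfolded arrows_def], of "\<lambda>e. c (h ` e)"] by simp
  moreover have tr: "contains_copy {e\<in>(`) h ` F. P e} K" if a: "contains_copy {e\<in>F. P (h ` e)} K" for P K
  proof -
    obtain f where f: "inj_on f (\<Union>K)" "\<forall>e\<in>K. f ` e \<in> {e\<in>F. P (h ` e)}"
      using a unfolding contains_copy_def by blast
    have "inj_on (h \<circ> f) (\<Union>K)" using f(1) assms(1) by (simp add: comp_inj_on inj_on_subset)
    moreover have "\<forall>e\<in>K. (h \<circ> f) ` e \<in> {e\<in>(`) h ` F. P e}" using f(2) by (auto simp: image_image)
    ultimately show ?thesis unfolding contains_copy_def by blast
  qed
  ultimately show "contains_copy {e\<in>(`) h ` F. c e} G \<or> contains_copy {e\<in>(`) h ` F. \<not> c e} H"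
    using tr[of c G] tr[of "\<lambda>e. \<not> c e" H] by blast
qed

lemma card_enc:
  assumes "inj h" shows "card ((`) h ` F) = card F"
  using assms by (intro card_image) (simp add: inj_on_def inj_image_eq_iff)

lemma is_graph_enc:
  assumes "inj h" "is_graph F" shows "is_graph ((`) h ` F)"
  using assms unfolding is_graph_def
  by (auto simp: card_image inj_on_subset)

lemma remove_sigma:
  fixes N :: nat and P L :: "nat \<Rightarrow> nat"
  assumes "\<sigma> ` {1..N+1} \<subseteq> I" "inj_on \<sigma> {1..N+1}" "\<forall>i\<in>{1..N+1}. P i \<le> L (\<sigma> i)"
    "\<forall>i\<in>{1..N}. P (i+1) \<le> P i"
  shows "\<exists>\<sigma>'. \<sigma>' ` {1..N} \<subseteq> I - {x} \<and> inj_on \<sigma>' {1..N} \<and> (\<forall>i\<in>{1..N}. P (i+1) \<le> L (\<sigma>' i))"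
proof -
  obtain p where p: "p \<in> {1..N+1}" "x \<in> \<sigma> ` {1..N+1} \<Longrightarrow> \<sigma> p = x"
  proof (cases "x \<in> \<sigma> ` {1..N+1}")
    case True then show ?thesis using that by blast
  next
    case False then show ?thesis by (intro that[of "N+1"]) auto
  qed
  have neq: "\<sigma> q \<noteq> x" if "q \<in> {1..N+1}" "q \<noteq> p" for q
  proof
    assume q: "\<sigma> q = x"
    hence "x \<in> \<sigma> ` {1..N+1}" using that(1) by blast
    hence "\<sigma> p = \<sigma> q" using p(2) q by simp
    thus False using assms(2) p(1) that unfolding inj_on_def by blast
  qed
  define \<sigma>' where "\<sigma>' i = (if i < p then \<sigma> i else \<sigma> (i+1))" for i
  show ?thesis
  proof (intro exI conjI ballI)
    show "\<sigma>' ` {1..N} \<subseteq> I - {x}"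
    proof
      fix y assume "y \<in> \<sigma>' ` {1..N}"
      then obtain i where i: "i \<in> {1..N}" "y = \<sigma>' i" by blast
      show "y \<in> I - {x}"
      proof (cases "i < p")
        case True
        hence "y = \<sigma> i" "i \<in> {1..N+1}" "i \<noteq> p" using i by (auto simp: \<sigma>'_def)
        thus ?thesis using neq[of i] assms(1) by blast
      next
        case False
        hence "y = \<sigma> (i+1)" "i+1 \<in> {1..N+1}" "i+1 \<noteq> p" using i by (auto simp: \<sigma>'_def)
        thus ?thesis using neq[of "i+1"] assms(1) by blast
      qed
    qed
    show "inj_on \<sigma>' {1..N}"
    proof (rule inj_onI)
      fix i j assume ij: "i \<in> {1..N}" "j \<in> {1..N}" "\<sigma>' i = \<sigma>' j"
      have inj2: "\<sigma> a = \<sigma> b \<Longrightarrow> a \<in> {1..N+1} \<Longrightarrow> b \<in> {1..N+1} \<Longrightarrow> a = b" for a b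
        using assms(2) unfolding inj_on_def by blast
      have r: "i \<in> {1..N+1}" "j \<in> {1..N+1}" "i+1 \<in> {1..N+1}" "j+1 \<in> {1..N+1}" using ij by auto
      show "i = j"
      proof (cases "i < p"; cases "j < p")
        assume "i < p" "j < p" thus ?thesis using ij(3) inj2[of i j] r by (simp add: \<sigma>'_def)
      next
        assume "i < p" "\<not> j < p" thus ?thesis using ij(3) inj2[of i "j+1"] r by (simp add: \<sigma>'_def)
      next
        assume "\<not> i < p" "j < p" thus ?thesis using ij(3) inj2[of "i+1" j] r by (simp add: \<sigma>'_def)
      next
        assume "\<not> i < p" "\<not> j < p" thus ?thesis using ij(3) inj2[of "i+1" "j+1"] r by (simp add: \<sigma>'_def)
      qed
    qed
    fix i assume i: "i \<in> {1..N}"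
    show "P (i+1) \<le> L (\<sigma>' i)"
    proof (cases "i < p")
      case True
      have "P (i+1) \<le> P i" using assms(4) i by blast
      also have "P i \<le> L (\<sigma> i)" using assms(3) i by simp
      finally show ?thesis using True by (simp add: \<sigma>'_def)
    next
      case False
      then show ?thesis using assms(3) i by (simp add: \<sigma>'_def)
    qed
  qed
qed

definition pat :: "(nat \<Rightarrow> nat) \<Rightarrow> nat \<Rightarrow> nat \<Rightarrow> nat" where
  "pat l s i = (if i \<le> s then l 1 else l (i - s + 1))"

lemma upper_iter:
  fixes H :: "bvert set set" and c :: "bvert set \<Rightarrow> bool"
  assumes mono: "\<And>i j. 1 \<le> i \<Longrightarrow> i \<le> j \<Longrightarrow> j \<le> k \<Longrightarrow> l j \<le> l i" and k: "k \<ge> 1"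
    and noblue: "\<not> contains_copy {e \<in> H. \<not> c e} (Bgraph k l)"
  shows "sub I J L \<subseteq> H \<Longrightarrow> finite J \<Longrightarrow> card J \<ge> k + s - 1 \<Longrightarrow> \<sigma> ` {1..k+s-1} \<subseteq> I
    \<Longrightarrow> inj_on \<sigma> {1..k+s-1} \<Longrightarrow> (\<forall>i\<in>{1..k+s-1}. pat l s i \<le> L (\<sigma> i))
    \<Longrightarrow> contains_copy {e \<in> sub I J L. c e} (matching s)"
proof (induction s arbitrary: I J \<sigma>)
  case 0
  then show ?case unfolding contains_copy_def matching_def by auto
next
  case (Suc s)
  have N: "k + Suc s - 1 = (k + s - 1) + 1" using k by simp
  have red: "\<exists>e\<in>sub I J L. c e"
  proof (rule ccontr)
    assume "\<not> ?thesis"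
    hence eq: "{e \<in> sub I J L. \<not> c e} = sub I J L" by auto
    have kJ: "k \<le> card J" using Suc.prems(3) by simp
    obtain J' where J': "J' \<subseteq> J" "card J' = k" using obtain_subset_with_card_n[OF kJ] by metis
    have fJ': "finite J'" using J' Suc.prems(2) finite_subset by blast
    obtain \<tau> where \<tau>: "bij_betw \<tau> {1..card J'} J'" using ex_bij_betw_nat_finite_1[OF fJ'] by blast
    have "contains_copy (sub I J L) (Bgraph k l)"
    proof (rule copyB)
      show "\<sigma> ` {1..k} \<subseteq> I" using Suc.prems(4) by auto
      show "inj_on \<sigma> {1..k}" using Suc.prems(5) by (rule inj_on_subset) auto
      show "\<tau> ` {1..k} \<subseteq> J" using \<tau> J' by (auto simp: bij_betw_def)
      show "inj_on \<tau> {1..k}" using \<tau> J' by (auto simp: bij_betw_def)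
      show "\<forall>i\<in>{1..k}. l i \<le> L (\<sigma> i)"
      proof
        fix i assume i: "i \<in> {1..k}"
        have "l i \<le> pat l (Suc s) i"
        proof (cases "i \<le> Suc s")
          case True thus ?thesis using i mono[of 1 i] by (simp add: pat_def)
        next
          case False thus ?thesis using i mono[of "i - Suc s + 1" i] by (simp add: pat_def)
        qed
        also have "\<dots> \<le> L (\<sigma> i)" using Suc.prems(6) i by auto
        finally show "l i \<le> L (\<sigma> i)" .
      qed
    qed
    moreover have "sub I J L \<subseteq> {e\<in>H. \<not> c e}" using eq Suc.prems(1) by blast
    ultimately have "contains_copy {e \<in> H. \<not> c e} (Bgraph k l)"
      by (rule contains_copy_mono)
    thus False using noblue by simp
  qed
  then obtain e where e: "e \<in> sub I J L" "c e" by blast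
  have patmono: "\<forall>i\<in>{1..k+s-1}. pat l (Suc s) (i+1) \<le> pat l (Suc s) i"
  proof
    fix i assume i: "i \<in> {1..k+s-1}"
    show "pat l (Suc s) (i+1) \<le> pat l (Suc s) i"
    proof (cases "i + 1 \<le> Suc s")
      case True thus ?thesis by (simp add: pat_def)
    next
      case F: False
      show ?thesis
      proof (cases "i \<le> Suc s")
        case True
        hence "i = Suc s" using F by simp
        moreover have "2 \<le> k" using i \<open>i = Suc s\<close> by auto
        hence "l (Suc (Suc 0)) \<le> l 1" using mono[of 1 2] by (simp add: numeral_2_eq_2)
        ultimately show ?thesis by (simp add: pat_def)
      next
        case False
        thus ?thesis using i mono[of "i - Suc s + 1" "i + 1 - Suc s + 1"] by (simp add: pat_def)
      qed
    qed
  qed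
  have patsh: "pat l s i = pat l (Suc s) (i+1)" for i by (simp add: pat_def)
  have ext: "contains_copy {e \<in> sub I J L. c e} (matching (Suc s))"
    if x: "x \<in> I" and J'J: "J' \<subseteq> J" and cJ': "card J' \<ge> k + s - 1"
      and uv: "e = {PA x, v}" "v \<noteq> PA x" "v \<notin> \<Union>(sub (I - {x}) J' L)" for x J' v
  proof -
    obtain \<sigma>' where \<sigma>': "\<sigma>' ` {1..k+s-1} \<subseteq> I - {x}" "inj_on \<sigma>' {1..k+s-1}"
      "\<forall>i\<in>{1..k+s-1}. pat l (Suc s) (i+1) \<le> L (\<sigma>' i)"
    proof -
      have p4: "\<sigma> ` {1..(k+s-1)+1} \<subseteq> I" using Suc.prems(4) by (simp only: N)
      have p5: "inj_on \<sigma> {1..(k+s-1)+1}" using Suc.prems(5) by (simp only: N)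
      have p6: "\<forall>i\<in>{1..(k+s-1)+1}. pat l (Suc s) i \<le> L (\<sigma> i)" using Suc.prems(6) by (simp only: N)
      show ?thesis using remove_sigma[OF p4 p5 p6 patmono, of x] that by blast
    qed
    have sJ: "sub (I - {x}) J' L \<subseteq> H" using Suc.prems(1) sub_mono[of "I - {x}" I J' J L] J'J by blast
    have "contains_copy {e \<in> sub (I - {x}) J' L. c e} (matching s)"
      using Suc.IH[OF sJ _ cJ' \<sigma>'(1,2)] \<sigma>'(3) patsh finite_subset[OF J'J Suc.prems(2)] by simp
    then obtain g where g: "inj_on g (\<Union>(matching s))" "\<forall>e\<in>matching s. g ` e \<in> {e \<in> sub (I - {x}) J' L. c e}"
      unfolding contains_copy_def by blast
    have gsub: "g ` \<Union>(matching s) \<subseteq> \<Union>(sub (I - {x}) J' L)" using g(2) by blast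
    have PAx: "PA x \<notin> \<Union>(sub (I - {x}) J' L)" using Union_sub[of "I - {x}" J' L] by auto
    show ?thesis
    proof (rule extend_matching[OF g(1)])
      show "\<forall>e\<in>matching s. g ` e \<in> {e \<in> sub I J L. c e}"
        using g(2) sub_mono[of "I - {x}" I J' J L] J'J by blast
      show "PA x \<noteq> v" using uv by simp
      show "PA x \<notin> g ` \<Union>(matching s)" using gsub PAx by blast
      show "v \<notin> g ` \<Union>(matching s)" using gsub uv by blast
      show "{PA x, v} \<in> {e \<in> sub I J L. c e}" using e uv by simp
    qed
  qed
  from e(1) consider (a) x y where "x \<in> I" "y \<in> J" "e = {PA x, PB y}"
    | (b) x j where "x \<in> I" "j \<in> {1..L x}" "e = {PA x, Leaf x j}"
    unfolding sub_def by blast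
  then show ?case
  proof cases
    case a
    have "card (J - {y}) \<ge> k + s - 1" using a Suc.prems(2,3) by simp
    moreover have "PB y \<notin> \<Union>(sub (I - {x}) (J - {y}) L)" using Union_sub[of "I - {x}" "J - {y}" L] by auto
    ultimately show ?thesis using ext[of x "J - {y}" "PB y"] a by auto
  next
    case b
    have "card J \<ge> k + s - 1" using Suc.prems(3) by simp
    moreover have "Leaf x j \<notin> \<Union>(sub (I - {x}) J L)" using Union_sub[of "I - {x}" J L] by auto
    ultimately show ?thesis using ext[of x J "Leaf x j"] b by auto
  qed
qed

lemma deg:
  assumes "contains_copy F (Bgraph k l)" "k \<ge> 1" "finite F"
  shows "\<exists>v. k + l 1 \<le> card {e\<in>F. v \<in> e}"
proof -
  obtain f where inj: "inj_on f (\<Union>(Bgraph k l))" and im: "\<forall>e\<in>Bgraph k l. f ` e \<in> F"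
    using assms(1) unfolding contains_copy_def by blast
  define E1 where "E1 = sub {1} {1..k} l"
  have E1B: "E1 \<subseteq> Bgraph k l" unfolding E1_def Bgraph_sub using assms(2) by (intro sub_mono) auto
  have cE1: "card E1 = k + l 1" unfolding E1_def by (simp add: card_sub)
  have "inj_on ((`) f) E1"
  proof (rule inj_onI)
    fix a b assume "a \<in> E1" "b \<in> E1" "f ` a = f ` b"
    then show "a = b" using inj E1B inj_on_image_eq_iff[of f "\<Union>(Bgraph k l)" a b] by blast
  qed
  hence "card ((`) f ` E1) = k + l 1" using cE1 by (simp add: card_image)
  moreover have "(`) f ` E1 \<subseteq> {e\<in>F. f (PA 1) \<in> e}"
  proof
    fix x assume "x \<in> (`) f ` E1"
    then obtain e where e: "e \<in> E1" "x = f ` e" by blast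
    have "PA 1 \<in> e" using e(1) unfolding E1_def sub_def by auto
    thus "x \<in> {e\<in>F. f (PA 1) \<in> e}" using e E1B im by blast
  qed
  moreover have "finite {e\<in>F. f (PA 1) \<in> e}" using assms(3) by simp
  ultimately have "k + l 1 \<le> card {e\<in>F. f (PA 1) \<in> e}"
    using card_mono by metis
  thus ?thesis by blast
qed

lemma lower_aux:
  fixes F :: "'c set set"
  assumes k: "k \<ge> 1"
  shows "is_graph F \<Longrightarrow> arrows F (matching (Suc t)) (Bgraph k l)
     \<Longrightarrow> t * (k + l 1) + card (Bgraph k l) \<le> card F"
proof (induction t arbitrary: F)
  case 0
  have "contains_copy F (Bgraph k l)" using all_blue[OF _ 0(2)] by simp
  moreover have "finite F" using 0(1) by (simp add: is_graph_def)
  ultimately show ?case using copy_card by simp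
next
  case (Suc t)
  have fin: "finite F" using Suc.prems(1) by (simp add: is_graph_def)
  have "contains_copy F (Bgraph k l)" using all_blue[OF _ Suc.prems(2)] by simp
  then obtain v where v: "k + l 1 \<le> card {e\<in>F. v \<in> e}" using deg k fin by blast
  define F' where "F' = {e\<in>F. v \<notin> e}"
  have gF': "is_graph F'" using Suc.prems(1) unfolding is_graph_def F'_def by auto
  have aF': "arrows F' (matching (Suc t)) (Bgraph k l)"
    unfolding arrows_def
  proof
    fix c :: "'c set \<Rightarrow> bool"
    have d: "contains_copy {e\<in>F. v \<in> e \<or> c e} (matching (Suc (Suc t))) \<or>
          contains_copy {e\<in>F. \<not> (v \<in> e \<or> c e)} (Bgraph k l)"
      using spec[OF Suc.prems(2)[unfolded arrows_def], of "\<lambda>e. v \<in> e \<or> c e"] by simp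
    have e1: "{e\<in>{e\<in>F. v \<in> e \<or> c e}. v \<notin> e} = {e\<in>F'. c e}" unfolding F'_def by auto
    have e2: "{e\<in>F. \<not> (v \<in> e \<or> c e)} = {e\<in>F'. \<not> c e}" unfolding F'_def by auto
    from d show "contains_copy {e\<in>F'. c e} (matching (Suc t)) \<or> contains_copy {e\<in>F'. \<not> c e} (Bgraph k l)"
    proof
      assume "contains_copy {e\<in>F. v \<in> e \<or> c e} (matching (Suc (Suc t)))"
      hence "contains_copy {e\<in>{e\<in>F. v \<in> e \<or> c e}. v \<notin> e} (matching (Suc t))" by (rule drop_vertex)
      thus ?thesis unfolding e1 ..
    next
      assume "contains_copy {e\<in>F. \<not> (v \<in> e \<or> c e)} (Bgraph k l)"
      thus ?thesis unfolding e2 ..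
    qed
  qed
  have IH: "t * (k + l 1) + card (Bgraph k l) \<le> card F'" by (rule Suc.IH[OF gF' aF'])
  have "card F = card {e\<in>F. v \<in> e} + card F'"
  proof -
    have u: "F = {e\<in>F. v \<in> e} \<union> F'" unfolding F'_def by auto
    have "card ({e\<in>F. v \<in> e} \<union> F') = card {e\<in>F. v \<in> e} + card F'"
      by (rule card_Un_disjoint) (use fin in \<open>auto simp: F'_def\<close>)
    thus ?thesis using u by simp
  qed
  then show ?case using IH v by simp
qed

lemma sum_pat:
  assumes "t \<ge> 1"
  shows "k \<ge> 1 \<Longrightarrow> (\<Sum>i=1..k+t-1. pat l t i) = (t-1) * l 1 + (\<Sum>i=1..k. l i)"
proof (induction k)
  case 0 then show ?case by simp
next
  case (Suc k)
  show ?case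
  proof (cases "k = 0")
    case True
    have "(\<Sum>i=1..t. pat l t i) = (\<Sum>i=1..t. l 1)" by (rule sum.cong) (auto simp: pat_def)
    then show ?thesis using True assms by (simp add: mult_eq_if)
  next
    case False
    have eq: "Suc k + t - 1 = Suc (k + t - 1)" using assms by simp
    have "(\<Sum>i=1..Suc k+t-1. pat l t i) = (\<Sum>i=1..k+t-1. pat l t i) + pat l t (Suc (k+t-1))"
      unfolding eq by simp
    also have "pat l t (Suc (k+t-1)) = l (Suc k)" using False assms by (simp add: pat_def)
    finally show ?thesis using Suc.IH False by simp
  qed
qed

theorem proposition3p3:
  fixes k t :: nat and l :: "nat \<Rightarrow> nat" and n :: int
  assumes "k \<ge> 2"
    and "\<And>i j. 1 \<le> i \<Longrightarrow> i \<le> j \<Longrightarrow> j \<le> k \<Longrightarrow> l j \<le> l i"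
    and "n = 2 * int k + (\<Sum>i=1..k. int (l i))"
    and "t \<ge> 1"
  shows "(int t - 1) * (int k + int (l 1)) + n + int k * (int k - 2)
           \<le> int (size_ramsey (matching t) (Bgraph k l))
       \<and> int (size_ramsey (matching t) (Bgraph k l))
           \<le> n + (int t - 1) * int (l 1) + (int k + int t - 1)^2 - 2 * int k"
proof -
  have k1: "k \<ge> 1" using assms(1) by simp
  define m where "m = k + t - 1"
  define L where "L = pat l t"
  define S where "S = (\<Sum>i=1..k. l i)"
  define F0 where "F0 = (`) enc ` Bgraph m L"
  have arr: "arrows (Bgraph m L) (matching t) (Bgraph k l)"
    unfolding arrows_def
  proof
    fix c :: "bvert set \<Rightarrow> bool"
    show "contains_copy {e \<in> Bgraph m L. c e} (matching t) \<or> contains_copy {e \<in> Bgraph m L. \<not> c e} (Bgraph k l)"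
    proof (cases "contains_copy {e \<in> Bgraph m L. \<not> c e} (Bgraph k l)")
      case False
      have "contains_copy {e \<in> sub {1..m} {1..m} L. c e} (matching t)"
      proof (rule upper_iter[OF assms(2) k1 False])
        show "sub {1..m} {1..m} L \<subseteq> Bgraph m L" by (simp add: Bgraph_sub)
        show "finite {1..m}" by simp
        show "k + t - 1 \<le> card {1..m}" by (simp add: m_def)
        show "id ` {1..k + t - 1} \<subseteq> {1..m}" by (simp add: m_def)
        show "inj_on id {1..k + t - 1}" by simp
        show "\<forall>i\<in>{1..k + t - 1}. pat l t i \<le> L (id i)" by (simp add: L_def)
      qed
      then show ?thesis by (simp add: Bgraph_sub)
    qed simp
  qed
  have g0: "is_graph F0" unfolding F0_def Bgraph_sub
    by (intro is_graph_enc inj_enc is_graph_sub) auto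
  have a0: "arrows F0 (matching t) (Bgraph k l)" unfolding F0_def by (rule arrows_inj[OF inj_enc arr])
  have c0: "card F0 = m * m + (t - 1) * l 1 + S"
  proof -
    have "card F0 = card (Bgraph m L)" unfolding F0_def by (rule card_enc[OF inj_enc])
    also have "\<dots> = m * m + (\<Sum>i=1..m. L i)" by (rule card_Bgraph)
    also have "(\<Sum>i=1..m. L i) = (t - 1) * l 1 + S"
      unfolding m_def L_def S_def by (rule sum_pat[OF assms(4) k1])
    finally show ?thesis by simp
  qed
  define R where "R = size_ramsey (matching t) (Bgraph k l)"
  have ex: "\<exists>F :: nat set set. is_graph F \<and> card F = card F0 \<and> arrows F (matching t) (Bgraph k l)"
    using g0 a0 by blast
  define P where "P x \<longleftrightarrow> (\<exists>F :: nat set set. is_graph F \<and> card F = x \<and> arrows F (matching t) (Bgraph k l))" for x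
  have PF0: "P (card F0)" using ex unfolding P_def .
  have Rl: "R = (LEAST x. P x)" unfolding R_def size_ramsey_def P_def ..
  have up: "R \<le> m * m + (t - 1) * l 1 + S"
    unfolding Rl using Least_le[of P, OF PF0] c0 by simp
  obtain F :: "nat set set" where F: "is_graph F" "card F = R" "arrows F (matching t) (Bgraph k l)"
  proof -
    have "P R" unfolding Rl by (rule LeastI[of P, OF PF0])
    thus ?thesis using that unfolding P_def by blast
  qed
  have tt: "t = Suc (t - 1)" using assms(4) by simp
  have lo: "(t - 1) * (k + l 1) + (k * k + S) \<le> R"
    using lower_aux[OF k1, of F "t - 1" l] F tt card_Bgraph[of k l] unfolding S_def by simp
  have nS: "n = 2 * int k + int S" using assms(3) unfolding S_def by (simp add: of_nat_sum)
  have it: "int (t - 1) = int t - 1" using assms(4) by simp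
  have im: "int m = int k + int t - 1" using assms(4) unfolding m_def by simp
  have lo': "int ((t - 1) * (k + l 1) + (k * k + S)) \<le> int R" by (simp only: of_nat_le_iff lo)
  have up': "int R \<le> int (m * m + (t - 1) * l 1 + S)" by (simp only: of_nat_le_iff up)
  have lo'': "(int t - 1) * (int k + int (l 1)) + (int k * int k + int S) \<le> int R"
    using lo' unfolding of_nat_add of_nat_mult it .
  have up'': "int R \<le> int m * int m + (int t - 1) * int (l 1) + int S"
    using up' unfolding of_nat_add of_nat_mult it .
  show ?thesis
    unfolding R_def[symmetric]
  proof
    show "(int t - 1) * (int k + int (l 1)) + n + int k * (int k - 2) \<le> int R"
      using lo'' unfolding nS by (simp add: algebra_simps)
    show "int R \<le> n + (int t - 1) * int (l 1) + (int k + int t - 1)^2 - 2 * int k"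
      using up'' unfolding nS im[symmetric] power2_eq_square by simp
  qed
qed

end
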